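(* Let $V$ be a vertex algebra over $\mathbb{F}$ and let $W$ be a $(V,\mathcal{B})$-module. Set $W^{\mathcal{D}}=\{w\in W\mid \mathcal{D}^{(n)}w=0\text{ for all } n\ge1\}$. If $f:V\to W$ is a $V$-module homomorphism, then $f$ is a $(V,\mathcal{B})$-module homomorphism (i.e. also a $\mathcal{B}$-module homomorphism) if and only if $f(\mathbf{1})\in W^{\mathcal{D}}$. Furthermore, the map $\phi:\mathrm{Hom}_{(V,\mathcal{B})}(V,W)\to W^{\mathcal{D}}$, $\phi(f)=f(\mathbf{1})$, is a linear isomorphism.
   Context: $\mathbb{F}$ is an algebraically closed field of odd prime characteristic $p$; vertex algebras and their modules over $\mathbb{F}$ are defined by the usual axioms with the Jacobi identity. $\mathcal{B}$ is the bialgebra with basis $\{\mathcal{D}^{(n)}\mid n\in\mathbb{N}\}$, $\mathcal{D}^{(0)}=1$, $\mathcal{D}^{(m)}\mathcal{D}^{(n)}=\binom{m+n}{n}\mathcal{D}^{(m+n)}$, $\Delta(\mathcal{D}^{(n)})=\sum_{i=0}^n\mathcal{D}^{(n-i)}\otimes\mathcal{D}^{(i)}$, $\varepsilon(\mathcal{D}^{(n)})=\delta_{n,0}$; write $e^{x\mathcal{D}}=\sum_{n\ge0}x^n\mathcal{D}^{(n)}$. Every vertex algebra $V$ is a $\mathcal{B}$-module via $\mathcal{D}^{(n)}v=v_{-n-1}\mathbf{1}$. A $(V,\mathcal{B})$-module is a $V$-module $(W,Y_W)$ that is also a $\mathcal{B}$-module with $e^{x\mathcal{D}}Y_W(v,z)e^{-x\mathcal{D}}=Y_W(e^{x\mathcal{D}}v,z)$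 for all $v\in V$. $\mathrm{Hom}_{(V,\mathcal{B})}(V,W)$ is the space of maps that are both $V$-module and $\mathcal{B}$-module homomorphisms. *)

theory Defs
  imports "HOL-Computational_Algebra.Polynomial" "HOL-Library.Groups_Big_Fun"
begin

(* Binomial coefficient binom(m,i) for an integer top entry m and i :: nat,
   i.e. m(m-1)...(m-i+1)/i!, written integrally (valid in any characteristic). *)
definition int_binom :: "int \<Rightarrow> nat \<Rightarrow> int" where
  "int_binom m i = (if 0 \<le> m then int (nat m choose i)
                    else (-1) ^ i * int ((nat (-m) + i - 1) choose i))"

(* Jacobi identity in component form (coefficient of z0^(-l-1) z1^(-m-1) z2^(-n-1)).
   YV u n v = u_n v  (vertex operators of V),  YW v n w = v_n w (action on W).
   All sums have finite support by truncation; Sum_any sums over the support. *)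
definition jacobi_id ::
  "('k::field \<Rightarrow> 'w::ab_group_add \<Rightarrow> 'w) \<Rightarrow> ('v \<Rightarrow> int \<Rightarrow> 'v \<Rightarrow> 'v) \<Rightarrow> ('v \<Rightarrow> int \<Rightarrow> 'w \<Rightarrow> 'w) \<Rightarrow> bool" where
  "jacobi_id sW YV YW \<longleftrightarrow>
     (\<forall>u v w l m n.
        Sum_any (\<lambda>i::nat. sW (of_int (int_binom m i)) (YW (YV u (l + int i) v) (m + n - int i) w))
      = Sum_any (\<lambda>i::nat. sW (of_int ((-1) ^ i * int_binom l i))
            (YW u (l + m - int i) (YW v (n + int i) w)
             - sW ((-1) powi l) (YW v (l + n - int i) (YW u (m + int i) w)))))"

definition vertex_algebra ::
  "('k::field \<Rightarrow> 'v::ab_group_add \<Rightarrow> 'v) \<Rightarrow> ('v \<Rightarrow> int \<Rightarrow> 'v \<Rightarrow> 'v) \<Rightarrow> 'v \<Rightarrow> bool" where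
  "vertex_algebra sV Y vac \<longleftrightarrow>
     vector_space sV
   \<and> (\<forall>u n. Vector_Spaces.linear sV sV (Y u n))
   \<and> (\<forall>v n. Vector_Spaces.linear sV sV (\<lambda>u. Y u n v))
   \<and> (\<forall>u v. \<exists>N. \<forall>n\<ge>N. Y u n v = 0)
   \<and> (\<forall>v n. Y vac n v = (if n = -1 then v else 0))
   \<and> (\<forall>v. Y v (-1) vac = v)
   \<and> (\<forall>v n. 0 \<le> n \<longrightarrow> Y v n vac = 0)
   \<and> jacobi_id sV Y Y"

definition va_module ::
  "('k::field \<Rightarrow> 'v::ab_group_add \<Rightarrow> 'v) \<Rightarrow> ('v \<Rightarrow> int \<Rightarrow> 'v \<Rightarrow> 'v) \<Rightarrow> 'v
   \<Rightarrow> ('k \<Rightarrow> 'w::ab_group_add \<Rightarrow> 'w) \<Rightarrow> ('v \<Rightarrow> int \<Rightarrow> 'w \<Rightarrow> 'w) \<Rightarrow> bool" where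
  "va_module sV Y vac sW YW \<longleftrightarrow>
     vector_space sW
   \<and> (\<forall>v n. Vector_Spaces.linear sW sW (YW v n))
   \<and> (\<forall>w n. Vector_Spaces.linear sV sW (\<lambda>v. YW v n w))
   \<and> (\<forall>v w. \<exists>N. \<forall>n\<ge>N. YW v n w = 0)
   \<and> (\<forall>w n. YW vac n w = (if n = -1 then w else 0))
   \<and> jacobi_id sW Y YW"

(* module over the bialgebra B with basis D^(n):  D n = action of D^(n) *)
definition B_module :: "('k::field \<Rightarrow> 'w::ab_group_add \<Rightarrow> 'w) \<Rightarrow> (nat \<Rightarrow> 'w \<Rightarrow> 'w) \<Rightarrow> bool" where
  "B_module sW D \<longleftrightarrow>
     (\<forall>n. Vector_Spaces.linear sW sW (D n))
   \<and> (\<forall>w. D 0 w = w)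
   \<and> (\<forall>m n w. D m (D n w) = sW (of_nat ((m + n) choose n)) (D (m + n) w))"

definition DV :: "('v \<Rightarrow> int \<Rightarrow> 'v \<Rightarrow> 'v) \<Rightarrow> 'v \<Rightarrow> nat \<Rightarrow> 'v \<Rightarrow> 'v" where
  "DV Y vac n v = Y v (- int n - 1) vac"

(* (V,B)-module: e^{xD} Y_W(v,z) e^{-xD} = Y_W(e^{xD} v, z), compared coefficientwise
   in x^k and z^{-n-1}, where e^{-xD} = sum_b (-x)^b D^(b). *)
definition VB_module ::
  "('k::field \<Rightarrow> 'v::ab_group_add \<Rightarrow> 'v) \<Rightarrow> ('v \<Rightarrow> int \<Rightarrow> 'v \<Rightarrow> 'v) \<Rightarrow> 'v
   \<Rightarrow> ('k \<Rightarrow> 'w::ab_group_add \<Rightarrow> 'w) \<Rightarrow> ('v \<Rightarrow> int \<Rightarrow> 'w \<Rightarrow> 'w) \<Rightarrow> (nat \<Rightarrow> 'w \<Rightarrow> 'w) \<Rightarrow> bool" where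
  "VB_module sV Y vac sW YW D \<longleftrightarrow>
     va_module sV Y vac sW YW
   \<and> B_module sW D
   \<and> (\<forall>v n k w. (\<Sum>a\<le>k. D a (YW v n (sW ((-1) ^ (k - a)) (D (k - a) w))))
                 = YW (DV Y vac k v) n w)"

definition V_hom ::
  "('k::field \<Rightarrow> 'v::ab_group_add \<Rightarrow> 'v) \<Rightarrow> ('v \<Rightarrow> int \<Rightarrow> 'v \<Rightarrow> 'v)
   \<Rightarrow> ('k \<Rightarrow> 'w::ab_group_add \<Rightarrow> 'w) \<Rightarrow> ('v \<Rightarrow> int \<Rightarrow> 'w \<Rightarrow> 'w) \<Rightarrow> ('v \<Rightarrow> 'w) \<Rightarrow> bool" where
  "V_hom sV Y sW YW f \<longleftrightarrow> Vector_Spaces.linear sV sW f \<and> (\<forall>u n v. f (Y u n v) = YW u n (f v))"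

definition B_hom ::
  "('v \<Rightarrow> int \<Rightarrow> 'v \<Rightarrow> 'v) \<Rightarrow> 'v \<Rightarrow> (nat \<Rightarrow> 'w \<Rightarrow> 'w) \<Rightarrow> ('v \<Rightarrow> 'w) \<Rightarrow> bool" where
  "B_hom Y vac D f \<longleftrightarrow> (\<forall>n v. f (DV Y vac n v) = D n (f v))"

definition VB_Hom ::
  "('k::field \<Rightarrow> 'v::ab_group_add \<Rightarrow> 'v) \<Rightarrow> ('v \<Rightarrow> int \<Rightarrow> 'v \<Rightarrow> 'v) \<Rightarrow> 'v
   \<Rightarrow> ('k \<Rightarrow> 'w::ab_group_add \<Rightarrow> 'w) \<Rightarrow> ('v \<Rightarrow> int \<Rightarrow> 'w \<Rightarrow> 'w) \<Rightarrow> (nat \<Rightarrow> 'w \<Rightarrow> 'w) \<Rightarrow> ('v \<Rightarrow> 'w) set" where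
  "VB_Hom sV Y vac sW YW D = {f. V_hom sV Y sW YW f \<and> B_hom Y vac D f}"

definition W_D :: "(nat \<Rightarrow> 'w::zero \<Rightarrow> 'w) \<Rightarrow> 'w set" where
  "W_D D = {w. \<forall>n\<ge>1. D n w = 0}"

end

theory Submission
  imports Defs
begin

lemma lin_add: "Vector_Spaces.linear s1 s2 f \<Longrightarrow> f (x + y) = f x + f y"
  by (simp add: Vector_Spaces.linear_iff)
lemma lin_scale: "Vector_Spaces.linear s1 s2 f \<Longrightarrow> f (s1 c x) = s2 c (f x)"
  by (simp add: Vector_Spaces.linear_iff)
lemma lin_zero: "Vector_Spaces.linear s1 s2 f \<Longrightarrow> f 0 = 0"
  using lin_add[of s1 s2 f 0 0] by simp

lemma vs_zl: "vector_space s \<Longrightarrow> s 0 x = 0"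
  by (rule module.scale_zero_left) (simp add: module_iff_vector_space)
lemma vs_zr: "vector_space s \<Longrightarrow> s c 0 = 0"
  by (rule module.scale_zero_right) (simp add: module_iff_vector_space)
lemma vs_one: "vector_space s \<Longrightarrow> s 1 x = x"
  by (rule module.scale_one) (simp add: module_iff_vector_space)
lemma vs_ss: "vector_space s \<Longrightarrow> s a (s b x) = s (a * b) x"
  by (rule module.scale_scale) (simp add: module_iff_vector_space)
lemma vs_add: "vector_space s \<Longrightarrow> s a (x + y) = s a x + s a y"
  by (rule module.scale_right_distrib) (simp add: module_iff_vector_space)
lemma vs_diff: "vector_space s \<Longrightarrow> s a (x - y) = s a x - s a y"
  by (rule module.scale_right_diff_distrib) (simp add: module_iff_vector_space)
lemma vs_eq0: "vector_space s \<Longrightarrow> s a x = 0 \<longleftrightarrow> a = 0 \<or> x = 0"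
  by (rule vector_space.scale_eq_0_iff)

lemma Sum_any_single: "(\<And>i. i \<noteq> a \<Longrightarrow> g i = 0) \<Longrightarrow> Sum_any g = g a"
  by (subst Sum_any.expand_superset[of "{a}"]) auto

lemma int_binom_0 [simp]: "int_binom l 0 = 1"
  by (simp add: int_binom_def)

lemma J0:
  assumes "va_module sV Y vac sW YW"
  shows "YW (Y u l v) n w = Sum_any (\<lambda>i::nat. sW (of_int ((-1) ^ i * int_binom l i))
            (YW u (l - int i) (YW v (n + int i) w)
             - sW ((-1) powi l) (YW v (l + n - int i) (YW u (int i) w))))"
proof -
  have vs: "vector_space sW" and J: "jacobi_id sW Y YW" using assms by (auto simp: va_module_def)
  have ib0: "int_binom 0 i = 0" if "i \<noteq> 0" for i
    using that by (cases i) (auto simp: int_binom_def)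
  have "Sum_any (\<lambda>i::nat. sW (of_int (int_binom 0 i)) (YW (Y u (l + int i) v) (0 + n - int i) w))
     = sW (of_int (int_binom 0 0)) (YW (Y u (l + int 0) v) (0 + n - int 0) w)"
    by (rule Sum_any_single) (simp add: ib0 vs_zl[OF vs])
  also have "\<dots> = YW (Y u l v) n w" by (simp add: vs_one[OF vs])
  moreover have "Sum_any (\<lambda>i::nat. sW (of_int (int_binom 0 i)) (YW (Y u (l + int i) v) (0 + n - int i) w))
     = Sum_any (\<lambda>i::nat. sW (of_int ((-1) ^ i * int_binom l i))
            (YW u (l + 0 - int i) (YW v (n + int i) w)
             - sW ((-1) powi l) (YW v (l + n - int i) (YW u (0 + int i) w))))"
    using J unfolding jacobi_id_def by blast
  ultimately show ?thesis by simp
qed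


lemma binom_nz:
  fixes j q e :: nat
  assumes "prime CHAR('k::field)" "q = CHAR('k) ^ e" "j < q"
  shows "(of_nat ((q + j) choose j) :: 'k) \<noteq> 0"
proof -
  define P where "P = [:1, 1::'k:]"
  have c: "coeff (P ^ n) i = of_nat (n choose i)" if "i \<le> n" for n i
    using coeff_linear_poly_power[OF that, of 1 1] by (simp add: P_def)
  have P1: "P = 1 + monom 1 1" by (simp add: P_def monom_Suc one_pCons)
  have Pq: "P ^ q = 1 + monom 1 q"
  proof -
    have "P ^ q = 1 ^ q + (monom 1 1) ^ q"
      unfolding P1 by (rule freshmans_dream') (use assms in auto)
    thus ?thesis by (simp add: monom_power)
  qed
  have "coeff (P ^ (q + j)) j = coeff (P ^ j) j + coeff (monom 1 q * P ^ j) j"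
    by (simp add: power_add Pq algebra_simps)
  also have "\<dots> = 1" using assms(3) by (simp add: c coeff_monom_mult)
  finally show ?thesis using c[of j "q+j"] by simp
qed

lemma DY:
  assumes VB: "VB_module sV Y vac sW YW D" and w: "w \<in> W_D D"
  shows "D k (YW v m w) = YW (Y v (- int k - 1) vac) m w"
proof -
  have va: "va_module sV Y vac sW YW" and B: "B_module sW D"
    and key: "\<And>v n k w. (\<Sum>a\<le>k. D a (YW v n (sW ((-1) ^ (k - a)) (D (k - a) w))))
                 = YW (DV Y vac k v) n w"
    using VB by (auto simp: VB_module_def)
  have vs: "vector_space sW" and lin: "\<And>v n. Vector_Spaces.linear sW sW (YW v n)"
    using va by (auto simp: va_module_def)
  have linD: "\<And>n. Vector_Spaces.linear sW sW (D n)" and D0: "\<And>x. D 0 x = x"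
    using B by (auto simp: B_module_def)
  have wD: "D n w = 0" if "n \<ge> 1" for n using w that by (auto simp: W_D_def)
  have "(\<Sum>a\<le>k. D a (YW v m (sW ((-1) ^ (k - a)) (D (k - a) w))))
      = D k (YW v m (sW ((-1) ^ (k - k)) (D (k - k) w)))
        + (\<Sum>a\<in>{..k} - {k}. D a (YW v m (sW ((-1) ^ (k - a)) (D (k - a) w))))"
    by (rule sum.remove) auto
  also have "(\<Sum>a\<in>{..k} - {k}. D a (YW v m (sW ((-1) ^ (k - a)) (D (k - a) w)))) = 0"
  proof (intro sum.neutral ballI)
    fix x :: nat assume "x \<in> {..k} - {k}"
    hence "k - x \<ge> 1" by auto
    thus "D x (YW v m (sW ((-1) ^ (k - x)) (D (k - x) w))) = 0"
      by (simp add: wD vs_zr[OF vs] lin_zero[OF lin] lin_zero[OF linD])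
  qed
  finally have "(\<Sum>a\<le>k. D a (YW v m (sW ((-1) ^ (k - a)) (D (k - a) w)))) = D k (YW v m w)"
    by (simp add: D0 vs_one[OF vs])
  with key[of v m k w] show ?thesis by (simp add: DV_def)
qed

lemma B1:
  assumes va: "va_module sV Y vac sW YW"
  shows "YW (Y u (- int k - 1) vac) (-1) w = YW u (- int k - 1) w"
proof -
  have vs: "vector_space sW" and lin: "\<And>v n. Vector_Spaces.linear sW sW (YW v n)"
    and YV: "\<And>w n. YW vac n w = (if n = -1 then w else 0)"
    using va by (auto simp: va_module_def)
  show ?thesis
    apply (subst J0[OF va])
    apply (subst Sum_any_single[of 0])
    apply (auto simp: YV lin_zero[OF lin] vs_zr[OF vs] vs_one[OF vs])
    done
qed

lemma B2:
  assumes va: "va_module sV Y vac sW YW"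
  shows "YW (Y u (- int k - 1) vac) (int j + int k) w
     = sW (of_int ((-1) ^ j * int_binom (- int k - 1) j))
          (0 - sW ((-1) powi (- int k - 1)) (YW u (int j) w))"
proof -
  have vs: "vector_space sW" and lin: "\<And>v n. Vector_Spaces.linear sW sW (YW v n)"
    and YV: "\<And>w n. YW vac n w = (if n = -1 then w else 0)"
    using va by (auto simp: va_module_def)
  show ?thesis
    apply (subst J0[OF va])
    apply (subst Sum_any_single[of j])
    apply (auto simp: YV lin_zero[OF lin] vs_zr[OF vs])
    done
qed

lemma vac_like:
  fixes sV :: "'k::field \<Rightarrow> 'v::ab_group_add \<Rightarrow> 'v"
  assumes p: "prime CHAR('k)" and VB: "VB_module sV Y vac sW YW D" and w: "w \<in> W_D D"
  shows "YW u (int j) w = 0"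
proof -
  have va: "va_module sV Y vac sW YW" using VB by (simp add: VB_module_def)
  have vs: "vector_space sW" and lin: "\<And>v n. Vector_Spaces.linear sW sW (YW v n)"
    and tr: "\<And>v w. \<exists>N. \<forall>n\<ge>N. YW v n w = 0"
    using va by (auto simp: va_module_def)
  have linD: "\<And>n. Vector_Spaces.linear sW sW (D n)"
    using VB by (auto simp: VB_module_def B_module_def)
  obtain N where N: "\<And>n. n \<ge> N \<Longrightarrow> YW u n w = 0" using tr by blast
  define e where "e = j + nat N"
  define q where "q = CHAR('k) ^ e"
  have "CHAR('k) \<ge> 2" using p prime_ge_2_nat by blast
  hence "e < q" unfolding q_def
    by (meson less_exp order_less_le_trans power_increasing_iff one_less_numeral_iff semiring_norm(76) power_mono zero_le_numeral)
  hence jq: "j < q" and Nq: "int j + int q \<ge> N" unfolding e_def by auto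
  have "D q (YW u (int j + int q) w) = 0" using N[OF Nq] lin_zero[OF linD] by simp
  hence "sW (of_int ((-1) ^ j * int_binom (- int q - 1) j))
          (0 - sW ((-1) powi (- int q - 1)) (YW u (int j) w)) = 0"
    using DY[OF VB w, of q u "int j + int q"] B2[OF va, of u q j w] by simp
  moreover have "int_binom (- int q - 1) j = (-1) ^ j * int ((q + j) choose j)"
    by (simp add: int_binom_def nat_add_distrib)
  moreover have "(of_nat ((q + j) choose j) :: 'k) \<noteq> 0"
    by (rule binom_nz[OF p q_def jq])
  ultimately have "0 - sW ((-1) powi (- int q - 1)) (YW u (int j) w) = 0"
    by (simp add: vs_eq0[OF vs] flip: power_mult_distrib)
  hence "sW ((-1) powi (- int q - 1)) (YW u (int j) w) = 0" by simp
  thus ?thesis by (simp add: vs_eq0[OF vs])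
qed


lemma hom_fwd:
  assumes "vertex_algebra sV Y vac" "V_hom sV Y sW YW f"
  shows "f v = YW v (-1) (f vac)"
proof -
  have "Y v (-1) vac = v" using assms(1) by (simp add: vertex_algebra_def)
  moreover have "f (Y v (-1) vac) = YW v (-1) (f vac)" using assms(2) by (simp add: V_hom_def)
  ultimately show ?thesis by simp
qed

lemma part1:
  assumes va0: "vertex_algebra sV Y vac" and VB: "VB_module sV Y vac sW YW D"
    and f: "V_hom sV Y sW YW f"
  shows "B_hom Y vac D f \<longleftrightarrow> f vac \<in> W_D D"
proof
  have linf: "Vector_Spaces.linear sV sW f" and fY: "\<And>u n v. f (Y u n v) = YW u n (f v)"
    using f by (auto simp: V_hom_def)
  have Yvac: "\<And>v n. Y vac n v = (if n = -1 then v else 0)"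
    using va0 by (simp add: vertex_algebra_def)
  {
    assume "B_hom Y vac D f"
    hence Dn: "D n (f vac) = f (Y vac (- int n - 1) vac)" for n by (simp add: B_hom_def DV_def)
    show "f vac \<in> W_D D" unfolding W_D_def
    proof (intro CollectI allI impI)
      fix n :: nat assume "n \<ge> 1"
      hence "Y vac (- int n - 1) vac = 0" using Yvac by simp
      thus "D n (f vac) = 0" using Dn[of n] lin_zero[OF linf] by simp
    qed
  }
  {
    assume w: "f vac \<in> W_D D"
    have va: "va_module sV Y vac sW YW" using VB by (simp add: VB_module_def)
    show "B_hom Y vac D f"
      unfolding B_hom_def
    proof (intro allI)
      fix n v
      have "D n (f v) = D n (YW v (-1) (f vac))" by (rule arg_cong[where f="D n"], rule hom_fwd[OF va0 f])
      also have "\<dots> = YW (Y v (- int n - 1) vac) (-1) (f vac)" by (rule DY[OF VB w])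
      also have "\<dots> = YW v (- int n - 1) (f vac)" by (rule B1[OF va])
      also have "\<dots> = f (DV Y vac n v)" by (simp add: DV_def fY)
      finally show "f (DV Y vac n v) = D n (f v)" by (rule sym)
    qed
  }
qed

lemma surj_part:
  fixes sV :: "'k::field \<Rightarrow> 'v::ab_group_add \<Rightarrow> 'v"
  assumes p: "prime CHAR('k)" and VB: "VB_module sV Y vac sW YW D" and w: "w \<in> W_D D"
  shows "V_hom sV Y sW YW (\<lambda>v. YW v (-1) w)"
proof -
  have va: "va_module sV Y vac sW YW" using VB by (simp add: VB_module_def)
  have vs: "vector_space sW" and lin: "\<And>v n. Vector_Spaces.linear sW sW (YW v n)"
    and lin2: "\<And>w n. Vector_Spaces.linear sV sW (\<lambda>v. YW v n w)"
    using va by (auto simp: va_module_def)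
  have vl: "\<And>u j. YW u (int j) w = 0" by (rule vac_like[OF p VB w])
  have vl0: "YW u 0 w = 0" for u using vl[of u 0] by simp
  have vl2: "YW v (-1 + int i) w = 0" if "i \<noteq> 0" for v i
  proof -
    have e: "-1 + int i = int (i - 1)" using that by simp
    show ?thesis unfolding e by (rule vl)
  qed
  have vl3: "YW v (int i - 1) w = 0" if "i \<noteq> 0" for v i
    using vl2[OF that, of v] by (simp add: add.commute)
  show ?thesis unfolding V_hom_def
  proof (intro conjI allI)
    show "Vector_Spaces.linear sV sW (\<lambda>v. YW v (-1) w)" by (rule lin2)
    fix u n v
    show "YW (Y u n v) (-1) w = YW u n (YW v (-1) w)"
      apply (subst J0[OF va])
      apply (subst Sum_any_single[of 0])
      apply (auto simp: vl vl0 vl2 vl3 lin_zero[OF lin] vs_zr[OF vs] vs_one[OF vs])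
      done
  qed
qed

theorem lemma2p6:
  fixes sV :: "'k::alg_closed_field \<Rightarrow> 'v::ab_group_add \<Rightarrow> 'v"
    and Y :: "'v \<Rightarrow> int \<Rightarrow> 'v \<Rightarrow> 'v"
    and vac :: 'v
    and sW :: "'k \<Rightarrow> 'w::ab_group_add \<Rightarrow> 'w"
    and YW :: "'v \<Rightarrow> int \<Rightarrow> 'w \<Rightarrow> 'w"
    and D :: "nat \<Rightarrow> 'w \<Rightarrow> 'w"
  assumes "prime CHAR('k)" and "odd CHAR('k)"
    and "vertex_algebra sV Y vac"
    and "VB_module sV Y vac sW YW D"
  shows "(\<forall>f. V_hom sV Y sW YW f \<longrightarrow> (B_hom Y vac D f \<longleftrightarrow> f vac \<in> W_D D))
       \<and> bij_betw (\<lambda>f. f vac) (VB_Hom sV Y vac sW YW D) (W_D D)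
       \<and> (\<forall>f\<in>VB_Hom sV Y vac sW YW D. \<forall>g\<in>VB_Hom sV Y vac sW YW D.
            (\<lambda>x. f x + g x) \<in> VB_Hom sV Y vac sW YW D \<and> (\<lambda>x. f x + g x) vac = f vac + g vac)
       \<and> (\<forall>c. \<forall>f\<in>VB_Hom sV Y vac sW YW D.
            (\<lambda>x. sW c (f x)) \<in> VB_Hom sV Y vac sW YW D \<and> (\<lambda>x. sW c (f x)) vac = sW c (f vac))"
proof -
  note p = assms(1) and va0 = assms(3) and VB = assms(4)
  have va: "va_module sV Y vac sW YW" using VB by (simp add: VB_module_def)
  have vsW: "vector_space sW" and lin: "\<And>v n. Vector_Spaces.linear sW sW (YW v n)"
    using va by (auto simp: va_module_def)
  have vsV: "vector_space sV" using va0 by (simp add: vertex_algebra_def)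
  have linD: "\<And>n. Vector_Spaces.linear sW sW (D n)"
    using VB by (auto simp: VB_module_def B_module_def)
  have P1: "\<forall>f. V_hom sV Y sW YW f \<longrightarrow> (B_hom Y vac D f \<longleftrightarrow> f vac \<in> W_D D)"
    using part1[OF va0 VB] by blast
  have P2: "bij_betw (\<lambda>f. f vac) (VB_Hom sV Y vac sW YW D) (W_D D)"
    unfolding bij_betw_def
  proof (intro conjI)
    show "inj_on (\<lambda>f. f vac) (VB_Hom sV Y vac sW YW D)"
    proof (rule inj_onI)
      fix f g assume f: "f \<in> VB_Hom sV Y vac sW YW D" and g: "g \<in> VB_Hom sV Y vac sW YW D"
        and e: "f vac = g vac"
      show "f = g"
      proof
        fix v
        have "f v = YW v (-1) (f vac)" using f hom_fwd[OF va0, of sW YW f v] by (simp add: VB_Hom_def)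
        also have "\<dots> = YW v (-1) (g vac)" using e by simp
        also have "\<dots> = g v" using g hom_fwd[OF va0, of sW YW g v] by (simp add: VB_Hom_def)
        finally show "f v = g v" .
      qed
    qed
    show "(\<lambda>f. f vac) ` VB_Hom sV Y vac sW YW D = W_D D"
    proof
      show "(\<lambda>f. f vac) ` VB_Hom sV Y vac sW YW D \<subseteq> W_D D"
        using P1 by (auto simp: VB_Hom_def)
      show "W_D D \<subseteq> (\<lambda>f. f vac) ` VB_Hom sV Y vac sW YW D"
      proof
        fix w assume w: "w \<in> W_D D"
        have h: "V_hom sV Y sW YW (\<lambda>v. YW v (-1) w)" by (rule surj_part[OF p VB w])
        have wv: "YW vac (-1) w = w" using va by (simp add: va_module_def)
        have "B_hom Y vac D (\<lambda>v. YW v (-1) w)" using P1 h w wv by simp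
        hence "(\<lambda>v. YW v (-1) w) \<in> VB_Hom sV Y vac sW YW D" using h by (simp add: VB_Hom_def)
        thus "w \<in> (\<lambda>f. f vac) ` VB_Hom sV Y vac sW YW D" using wv by (metis (no_types, lifting) image_eqI)
      qed
    qed
  qed
  have P3: "\<forall>f\<in>VB_Hom sV Y vac sW YW D. \<forall>g\<in>VB_Hom sV Y vac sW YW D.
            (\<lambda>x. f x + g x) \<in> VB_Hom sV Y vac sW YW D \<and> (\<lambda>x. f x + g x) vac = f vac + g vac"
  proof (intro ballI conjI)
    fix f g assume f: "f \<in> VB_Hom sV Y vac sW YW D" and g: "g \<in> VB_Hom sV Y vac sW YW D"
    have lf: "Vector_Spaces.linear sV sW f" and lg: "Vector_Spaces.linear sV sW g"
      and fY: "\<And>u n v. f (Y u n v) = YW u n (f v)" and gY: "\<And>u n v. g (Y u n v) = YW u n (g v)"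
      and fD: "\<And>n v. f (DV Y vac n v) = D n (f v)" and gD: "\<And>n v. g (DV Y vac n v) = D n (g v)"
      using f g by (auto simp: VB_Hom_def V_hom_def B_hom_def)
    have "Vector_Spaces.linear sV sW (\<lambda>x. f x + g x)"
      unfolding Vector_Spaces.linear_iff
      using vsV vsW lin_add[OF lf] lin_add[OF lg] lin_scale[OF lf] lin_scale[OF lg] vs_add[OF vsW]
      by (simp add: algebra_simps)
    moreover have "\<forall>u n v. f (Y u n v) + g (Y u n v) = YW u n (f v + g v)"
      using fY gY lin_add[OF lin] by simp
    moreover have "\<forall>n v. f (DV Y vac n v) + g (DV Y vac n v) = D n (f v + g v)"
      using fD gD lin_add[OF linD] by simp
    ultimately show "(\<lambda>x. f x + g x) \<in> VB_Hom sV Y vac sW YW D"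
      by (simp add: VB_Hom_def V_hom_def B_hom_def)
  qed simp
  have P4: "\<forall>c. \<forall>f\<in>VB_Hom sV Y vac sW YW D.
            (\<lambda>x. sW c (f x)) \<in> VB_Hom sV Y vac sW YW D \<and> (\<lambda>x. sW c (f x)) vac = sW c (f vac)"
  proof (intro allI ballI conjI)
    fix c f assume f: "f \<in> VB_Hom sV Y vac sW YW D"
    have lf: "Vector_Spaces.linear sV sW f"
      and fY: "\<And>u n v. f (Y u n v) = YW u n (f v)"
      and fD: "\<And>n v. f (DV Y vac n v) = D n (f v)"
      using f by (auto simp: VB_Hom_def V_hom_def B_hom_def)
    have "Vector_Spaces.linear sV sW (\<lambda>x. sW c (f x))"
      unfolding Vector_Spaces.linear_iff
      using vsV vsW lin_add[OF lf] lin_scale[OF lf] vs_add[OF vsW] vs_ss[OF vsW]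
      by (simp add: mult.commute)
    moreover have "\<forall>u n v. sW c (f (Y u n v)) = YW u n (sW c (f v))"
      using fY lin_scale[OF lin] by simp
    moreover have "\<forall>n v. sW c (f (DV Y vac n v)) = D n (sW c (f v))"
      using fD lin_scale[OF linD] by simp
    ultimately show "(\<lambda>x. sW c (f x)) \<in> VB_Hom sV Y vac sW YW D"
      by (simp add: VB_Hom_def V_hom_def B_hom_def)
  qed simp
  show ?thesis using P1 P2 P3 P4 by blast
qed

end
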